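(* Let $p_1,\dots,p_s$ be distinct primes, $m_1,\dots,m_s\ge1$, and let $\Gamma$ be a multi-sorted constraint language over $\mathcal D=\{\mathbb Z_{p_1^{m_1}},\dots,\mathbb Z_{p_s^{m_s}}\}$ invariant with respect to the affine operation of $\mathbb Z_{p_1^{m_1}},\dots,\mathbb Z_{p_s^{m_s}}$. Let $\mathcal P$ be an instance of $\textsc{MCSP}(\Gamma)$. Then $\mathcal P$ is equivalent (has the same set of solutions) to an instance $\mathcal P'$ such that for every constraint $\langle\mathbf s,R\rangle$ of $\mathcal P'$ all variables in $\mathbf s$ are of the same sort. Moreover, $\mathcal P'$ has the same set of variables $X$ as $\mathcal P$, and every $x\in X$ has the same sort in $\mathcal P$ and $\mathcal P'$.
   Context: A multi-sorted relation with signature $(t_1,\dots,t_n)$ is a subset of $D_{t_1}\times\dots\times D_{t_n}$. An instance of $\textsc{MCSP}(\Gamma)$ is $(X,\mathcal D,\delta,\mathcal C)$ with $\delta$ assigning each variable a sort (domain) and constraints $\langle(x_1,\dots,x_m),R\rangle$ with $R\in\Gamma$ of signature $(\delta(x_1),\dots,\delta(x_m))$; solutions are assignments $\varphi(x)\in D_{\delta(x)}$ satisfying all constraints. Invariance under the affine operation: for all $\mathbf a,\mathbf b,\mathbf c\in R$, the coordinatewise $\mathbf a-\mathbf b+\mathbf c$ (in the respective groups) is in $R$. *)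

theory Defs
  imports "HOL-Computational_Algebra.Primes"
begin

text \<open>Sorts are indices i < s; the domain of sort i is Z_(q i), represented as
  the integers {0..<q i} with arithmetic modulo q i, where q i = p i ^ m i.
  A multi-sorted relation is a pair (signature, set of tuples), tuples being int lists.\<close>

type_synonym mrel = "nat list \<times> int list set"

definition dom_of :: "(nat \<Rightarrow> nat) \<Rightarrow> nat \<Rightarrow> int set" where
  "dom_of q i = {0..< int (q i)}"

definition is_mrel :: "nat \<Rightarrow> (nat \<Rightarrow> nat) \<Rightarrow> mrel \<Rightarrow> bool" where
  "is_mrel s q r \<longleftrightarrow> set (fst r) \<subseteq> {..<s} \<and>
     (\<forall>t \<in> snd r. length t = length (fst r) \<and>
        (\<forall>j < length t. t ! j \<in> dom_of q (fst r ! j)))"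

definition affine_invariant :: "(nat \<Rightarrow> nat) \<Rightarrow> mrel \<Rightarrow> bool" where
  "affine_invariant q r \<longleftrightarrow>
     (\<forall>a \<in> snd r. \<forall>b \<in> snd r. \<forall>c \<in> snd r.
        map (\<lambda>j. (a ! j - b ! j + c ! j) mod int (q (fst r ! j))) [0..<length (fst r)] \<in> snd r)"

type_synonym 'v constr = "'v list \<times> mrel"

definition wf_constr :: "'v set \<Rightarrow> ('v \<Rightarrow> nat) \<Rightarrow> 'v constr \<Rightarrow> bool" where
  "wf_constr X \<delta> c \<longleftrightarrow> set (fst c) \<subseteq> X \<and> map \<delta> (fst c) = fst (snd c)"

definition mcsp_instance :: "nat \<Rightarrow> (nat \<Rightarrow> nat) \<Rightarrow> mrel set \<Rightarrow> 'v set \<Rightarrow> ('v \<Rightarrow> nat)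
    \<Rightarrow> 'v constr set \<Rightarrow> bool" where
  "mcsp_instance s q \<Gamma> X \<delta> C \<longleftrightarrow> finite X \<and> finite C \<and> \<delta> ` X \<subseteq> {..<s} \<and>
     (\<forall>c \<in> C. wf_constr X \<delta> c \<and> snd c \<in> \<Gamma>)"

definition is_solution :: "(nat \<Rightarrow> nat) \<Rightarrow> 'v set \<Rightarrow> ('v \<Rightarrow> nat) \<Rightarrow> 'v constr set
    \<Rightarrow> ('v \<Rightarrow> int) \<Rightarrow> bool" where
  "is_solution q X \<delta> C \<phi> \<longleftrightarrow> (\<forall>x \<in> X. \<phi> x \<in> dom_of q (\<delta> x)) \<and>
     (\<forall>c \<in> C. map \<phi> (fst c) \<in> snd (snd c))"

end

theory Submission
  imports Defs "HOL-Number_Theory.Number_Theory"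
begin

lemma iter_aff:
  assumes aff: "affine_invariant q (sig, T)" and a: "a \<in> T" and b: "b \<in> T"
    and la: "length a = length sig" and lb: "length b = length sig"
    and bd: "\<forall>j < length sig. b ! j \<in> dom_of q (sig ! j)"
  shows "map (\<lambda>j. (b!j + int n * (a!j - b!j)) mod int (q (sig!j))) [0..<length sig] \<in> T"
proof (induction n)
  case 0
  have "map (\<lambda>j. (b!j + int 0 * (a!j - b!j)) mod int (q (sig!j))) [0..<length sig] = b"
    using bd lb by (intro nth_equalityI) (auto simp: dom_of_def)
  then show ?case using b by simp
next
  case (Suc n)
  let ?g = "map (\<lambda>j. (b!j + int n * (a!j - b!j)) mod int (q (sig!j))) [0..<length sig]"
  have "map (\<lambda>j. (?g ! j - b ! j + a ! j) mod int (q (sig ! j))) [0..<length sig] \<in> T"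
    using aff Suc a b unfolding affine_invariant_def by auto
  moreover have "map (\<lambda>j. (?g ! j - b ! j + a ! j) mod int (q (sig ! j))) [0..<length sig]
     = map (\<lambda>j. (b!j + int (Suc n) * (a!j - b!j)) mod int (q (sig!j))) [0..<length sig]"
  proof (intro nth_equalityI)
    fix j assume "j < length (map (\<lambda>j. (?g ! j - b ! j + a ! j) mod int (q (sig ! j))) [0..<length sig])"
    then have j: "j < length sig" by simp
    have "((b!j + int n * (a!j - b!j)) mod int (q (sig!j)) - b ! j + a ! j) mod int (q (sig ! j))
        = ((b!j + int n * (a!j - b!j)) mod int (q (sig!j)) + (a ! j - b ! j)) mod int (q (sig ! j))"
      by (simp add: algebra_simps)
    also have "\<dots> = ((b!j + int n * (a!j - b!j)) + (a ! j - b ! j)) mod int (q (sig ! j))"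
      by (simp add: mod_add_left_eq)
    also have "\<dots> = (b!j + int (Suc n) * (a!j - b!j)) mod int (q (sig!j))"
      by (simp add: algebra_simps)
    finally show "map (\<lambda>j. (?g ! j - b ! j + a ! j) mod int (q (sig ! j))) [0..<length sig] ! j =
         map (\<lambda>j. (b!j + int (Suc n) * (a!j - b!j)) mod int (q (sig!j))) [0..<length sig] ! j"
      using j by simp
  qed simp
  ultimately show ?case by simp
qed

lemma combine:
  assumes aff: "affine_invariant q (sig, T)" and a: "a \<in> T" and b: "b \<in> T"
    and la: "length a = length sig" and lb: "length b = length sig"
    and ad: "\<forall>j < length sig. a ! j \<in> dom_of q (sig ! j)"
    and bd: "\<forall>j < length sig. b ! j \<in> dom_of q (sig ! j)"
    and e: "\<forall>j < length sig. [int e = (if sig!j = k then 1 else 0)] (mod int (q (sig!j)))"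
  shows "map (\<lambda>j. if sig!j = k then a!j else b!j) [0..<length sig] \<in> T"
proof -
  have "map (\<lambda>j. (b!j + int e * (a!j - b!j)) mod int (q (sig!j))) [0..<length sig] \<in> T"
    by (rule iter_aff[OF aff a b la lb bd])
  moreover have "map (\<lambda>j. (b!j + int e * (a!j - b!j)) mod int (q (sig!j))) [0..<length sig]
      = map (\<lambda>j. if sig!j = k then a!j else b!j) [0..<length sig]"
  proof (intro nth_equalityI)
    fix j assume "j < length (map (\<lambda>j. (b!j + int e * (a!j - b!j)) mod int (q (sig!j))) [0..<length sig])"
    then have j: "j < length sig" by simp
    have c: "[b!j + int e * (a!j - b!j) = b!j + (if sig!j = k then 1 else 0) * (a!j - b!j)] (mod int (q (sig!j)))"
      using e j by (intro cong_add cong_mult) auto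
    have "(b!j + int e * (a!j - b!j)) mod int (q (sig!j)) = (b!j + (if sig!j = k then 1 else 0) * (a!j - b!j)) mod int (q (sig!j))"
      using c unfolding cong_def .
    also have "\<dots> = (if sig!j = k then a!j else b!j)"
      using ad bd j by (auto simp: dom_of_def)
    finally show "map (\<lambda>j. (b!j + int e * (a!j - b!j)) mod int (q (sig!j))) [0..<length sig] ! j
       = map (\<lambda>j. if sig!j = k then a!j else b!j) [0..<length sig] ! j" using j by simp
  qed simp
  ultimately show ?thesis by simp
qed

lemma fixall:
  assumes aff: "affine_invariant q (sig, T)"
    and mr: "is_mrel s q (sig, T)"
    and a0: "a0 \<in> T"
    and lt: "length t = length sig" and td: "\<forall>j < length sig. t ! j \<in> dom_of q (sig ! j)"
    and ai: "\<forall>i < s. \<exists>a \<in> T. \<forall>j < length sig. sig ! j = i \<longrightarrow> a ! j = t ! j"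
    and es: "\<forall>k < s. \<exists>e::nat. \<forall>i < s. [int e = (if i = k then 1 else 0)] (mod int (q i))"
  shows "t \<in> T"
proof -
  have mr': "\<And>u. u \<in> T \<Longrightarrow> length u = length sig \<and> (\<forall>j < length sig. u ! j \<in> dom_of q (sig ! j))"
    using mr unfolding is_mrel_def by auto
  have sl: "\<And>j. j < length sig \<Longrightarrow> sig ! j < s" proof -
    fix j assume "j < length sig" then have "sig ! j \<in> set sig" by (rule nth_mem)
    then show "sig ! j < s" using mr unfolding is_mrel_def by auto
  qed
  define w where "w k = map (\<lambda>j. if sig!j < k then t!j else a0!j) [0..<length sig]" for k
  have "k \<le> s \<Longrightarrow> w k \<in> T" for k
  proof (induction k)
    case 0
    have "w 0 = a0" unfolding w_def using mr'[OF a0] by (intro nth_equalityI) auto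
    then show ?case using a0 by simp
  next
    case (Suc k)
    then have k: "k < s" and wk: "w k \<in> T" by auto
    obtain a where a: "a \<in> T" and at: "\<forall>j < length sig. sig ! j = k \<longrightarrow> a ! j = t ! j"
      using ai k by blast
    obtain e :: nat where e: "\<forall>i < s. [int e = (if i = k then 1 else 0)] (mod int (q i))"
      using es k by blast
    have e': "\<forall>j < length sig. [int e = (if sig!j = k then 1 else 0)] (mod int (q (sig!j)))"
      using e sl by auto
    have "map (\<lambda>j. if sig!j = k then a!j else w k!j) [0..<length sig] \<in> T"
      using combine[OF aff a wk _ _ _ _ e'] mr'[OF a] mr'[OF wk] by blast
    moreover have "map (\<lambda>j. if sig!j = k then a!j else w k!j) [0..<length sig] = w (Suc k)"
      unfolding w_def using at by (intro nth_equalityI) auto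
    ultimately show ?case by simp
  qed
  moreover have "w s = t" unfolding w_def using lt sl by (intro nth_equalityI) auto
  ultimately show ?thesis by auto
qed

theorem proposition4p5:
  fixes s :: nat and p m :: "nat \<Rightarrow> nat" and \<Gamma> :: "mrel set"
    and X :: "'v set" and \<delta> :: "'v \<Rightarrow> nat" and C :: "'v constr set"
  assumes primes: "\<forall>i < s. prime (p i)"
    and distinct: "\<forall>i < s. \<forall>j < s. i \<noteq> j \<longrightarrow> p i \<noteq> p j"
    and exps: "\<forall>i < s. m i \<ge> 1"
    and lang: "\<forall>r \<in> \<Gamma>. is_mrel s (\<lambda>i. p i ^ m i) r"
    and affine: "\<forall>r \<in> \<Gamma>. affine_invariant (\<lambda>i. p i ^ m i) r"
    and inst: "mcsp_instance s (\<lambda>i. p i ^ m i) \<Gamma> X \<delta> C"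
  shows "\<exists>C' :: 'v constr set. finite C' \<and>
           (\<forall>c \<in> C'. wf_constr X \<delta> c \<and> is_mrel s (\<lambda>i. p i ^ m i) (snd c) \<and>
              (\<forall>x \<in> set (fst c). \<forall>y \<in> set (fst c). \<delta> x = \<delta> y)) \<and>
           (\<forall>\<phi>. is_solution (\<lambda>i. p i ^ m i) X \<delta> C' \<phi> \<longleftrightarrow>
                 is_solution (\<lambda>i. p i ^ m i) X \<delta> C \<phi>)"
proof -
  define q where "q = (\<lambda>i. p i ^ m i)"
  have es: "\<forall>k < s. \<exists>e::nat. \<forall>i < s. [int e = (if i = k then 1 else 0)] (mod int (q i))"
  proof (intro allI impI)
    fix k assume k: "k < s"
    define M where "M = (\<Prod>i \<in> {..<s} - {k}. q i)"
    have cop: "coprime M (q k)" unfolding M_def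
    proof (rule prod_coprime_left)
      fix i assume "i \<in> {..<s} - {k}"
      then have "i < s" "i \<noteq> k" by auto
      then have "coprime (p i) (p k)" using primes distinct k by (intro primes_coprime) auto
      then show "coprime (q i) (q k)" unfolding q_def by simp
    qed
    have qk: "q k > 0" unfolding q_def using primes k prime_gt_0_nat by simp
    define e where "e = M ^ totient (q k)"
    have tp: "totient (q k) > 0" using qk by simp
    show "\<exists>e::nat. \<forall>i < s. [int e = (if i = k then 1 else 0)] (mod int (q i))"
    proof (intro exI allI impI)
      fix i assume i: "i < s"
      show "[int e = (if i = k then 1 else 0)] (mod int (q i))"
      proof (cases "i = k")
        case True
        have "[e = 1] (mod q k)" unfolding e_def by (rule euler_theorem[OF cop])
        then show ?thesis using True by (simp add: cong_int_iff[symmetric])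
      next
        case False
        have "q i dvd M" unfolding M_def using i False by (intro dvd_prodI) auto
        then have "q i dvd e" unfolding e_def using tp by (meson dvd_power dvd_trans)
        then have "[e = 0] (mod q i)" by (simp add: cong_0_iff)
        then show ?thesis using False by (simp add: cong_int_iff[symmetric])
      qed
    qed
  qed
  define idx :: "mrel \<Rightarrow> nat \<Rightarrow> nat list" where
    "idx r i = filter (\<lambda>j. fst r ! j = i) [0..<length (fst r)]" for r i
  define mk :: "'v constr \<Rightarrow> nat \<Rightarrow> 'v constr" where
    "mk c i = (map (\<lambda>j. fst c ! j) (idx (snd c) i),
       (map (\<lambda>j. fst (snd c) ! j) (idx (snd c) i),
        (\<lambda>t. map (\<lambda>j. t ! j) (idx (snd c) i)) ` snd (snd c)))" for c i
  define C' where "C' = (\<lambda>(c, i). mk c i) ` (C \<times> {..s})"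
  have instC: "finite C" "\<forall>c \<in> C. wf_constr X \<delta> c \<and> snd c \<in> \<Gamma>" "finite X" "\<delta> ` X \<subseteq> {..<s}"
    using inst unfolding mcsp_instance_def by auto
  show ?thesis
  proof (intro exI conjI ballI allI)
    show "finite C'" unfolding C'_def using instC by auto
  next
    fix c' assume "c' \<in> C'"
    then obtain c i where c: "c \<in> C" and i: "i \<le> s" and c': "c' = mk c i"
      unfolding C'_def by auto
    obtain sc sig T where cc: "c = (sc, sig, T)" by (cases c) auto
    have wf: "set sc \<subseteq> X" "map \<delta> sc = sig" proof -
        have "wf_constr X \<delta> c" using instC c by auto
        then show "set sc \<subseteq> X" "map \<delta> sc = sig" using cc unfolding wf_constr_def by auto
      qed
    have mr: "is_mrel s q (sig, T)" using lang instC c cc unfolding q_def by auto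
    have ls: "length sc = length sig" using wf by auto
    have sd: "\<And>j. j < length sig \<Longrightarrow> \<delta> (sc ! j) = sig ! j" using wf ls
      by (metis nth_map)
    have "set (map ((!) sc) (idx (sig, T) i)) \<subseteq> X"
      using wf(1) ls unfolding idx_def by (auto intro!: nth_mem)
    moreover have "map \<delta> (map ((!) sc) (idx (sig, T) i)) = map ((!) sig) (idx (sig, T) i)"
      unfolding idx_def by (auto simp: sd)
    ultimately show "wf_constr X \<delta> c'"
      unfolding c' cc mk_def wf_constr_def by simp
    have ib: "\<And>j. j < length (idx (sig, T) i) \<Longrightarrow> idx (sig, T) i ! j < length sig"
    proof -
      fix j assume "j < length (idx (sig, T) i)"
      then have "idx (sig, T) i ! j \<in> set (idx (sig, T) i)" by (rule nth_mem)
      then show "idx (sig, T) i ! j < length sig" unfolding idx_def by auto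
    qed
    have ib2: "\<And>x. x \<in> set (idx (sig, T) i) \<Longrightarrow> sig ! x < s"
    proof -
      fix x assume "x \<in> set (idx (sig, T) i)"
      then have "x < length sig" unfolding idx_def by auto
      then have "sig ! x \<in> set sig" by (rule nth_mem)
      then show "sig ! x < s" using mr unfolding is_mrel_def by auto
    qed
    show "is_mrel s (\<lambda>i. p i ^ m i) (snd c')"
      using mr ib ib2 unfolding c' cc mk_def is_mrel_def q_def[symmetric]
      by (auto simp: subset_iff)
    fix x y assume xy: "x \<in> set (fst c')" "y \<in> set (fst c')"
    have "\<And>z. z \<in> set (fst c') \<Longrightarrow> \<delta> z = i"
      unfolding c' cc mk_def idx_def using ls by (auto simp: sd)
    then show "\<delta> x = \<delta> y" using xy by simp
  next
    fix \<phi>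
    have one: "\<forall>c \<in> C'. map \<phi> (fst c) \<in> snd (snd c)" if sol: "\<forall>c \<in> C. map \<phi> (fst c) \<in> snd (snd c)"
    proof
      fix c' assume "c' \<in> C'"
      then obtain c i where c: "c \<in> C" and i: "i \<le> s" and c': "c' = mk c i"
        unfolding C'_def by auto
      obtain sc sig T where cc: "c = (sc, sig, T)" by (cases c) auto
      have wf: "map \<delta> sc = sig" proof -
        have "wf_constr X \<delta> c" using instC c by auto
        then show "map \<delta> sc = sig" using cc unfolding wf_constr_def by auto
      qed
      have ls: "length sc = length sig" using wf by auto
      have "map \<phi> sc \<in> T" using sol c cc by auto
      moreover have "map \<phi> (map ((!) sc) (idx (sig, T) i)) = map ((!) (map \<phi> sc)) (idx (sig, T) i)"
        unfolding idx_def using ls by auto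
      ultimately show "map \<phi> (fst c') \<in> snd (snd c')" unfolding c' cc mk_def by auto
    qed
    have two: "\<forall>c \<in> C. map \<phi> (fst c) \<in> snd (snd c)"
      if sol: "\<forall>c \<in> C'. map \<phi> (fst c) \<in> snd (snd c)" and dm: "\<forall>x\<in>X. \<phi> x \<in> dom_of q (\<delta> x)"
    proof
      fix c assume c: "c \<in> C"
      obtain sc sig T where cc: "c = (sc, sig, T)" by (cases c) auto
      have wf: "set sc \<subseteq> X" "map \<delta> sc = sig" proof -
        have "wf_constr X \<delta> c" using instC c by auto
        then show "set sc \<subseteq> X" "map \<delta> sc = sig" using cc unfolding wf_constr_def by auto
      qed
      have mr: "is_mrel s q (sig, T)" using lang instC c cc unfolding q_def by auto
      have aff: "affine_invariant q (sig, T)" using affine instC c cc unfolding q_def by auto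
      have ls: "length sc = length sig" using wf by auto
      have sd: "\<And>j. j < length sig \<Longrightarrow> \<delta> (sc ! j) = sig ! j" using wf ls
        by (metis nth_map)
      have sl: "\<And>j. j < length sig \<Longrightarrow> sig ! j < s" proof -
    fix j assume "j < length sig" then have "sig ! j \<in> set sig" by (rule nth_mem)
    then show "sig ! j < s" using mr unfolding is_mrel_def by auto
  qed
      have memi: "map \<phi> (map ((!) sc) (idx (sig, T) i)) \<in> (\<lambda>t. map ((!) t) (idx (sig, T) i)) ` T"
        if "i \<le> s" for i
        using sol that c unfolding C'_def mk_def cc by force
      have "idx (sig, T) s = []" 
      proof -
        have "\<forall>x\<in>set [0..<length sig]. \<not> sig ! x = s" using sl by fastforce
        then show ?thesis unfolding idx_def fst_conv by (rule filter_False)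
      qed
      then obtain a0 where a0: "a0 \<in> T" using memi[of s] by auto
      let ?t = "map \<phi> sc"
      show "map \<phi> (fst c) \<in> snd (snd c)" unfolding cc fst_conv snd_conv
      proof (rule fixall[OF aff mr a0 _ _ _ es])
        show "length ?t = length sig" using ls by simp
        show "\<forall>j<length sig. ?t ! j \<in> dom_of q (sig ! j)"
          using dm wf(1) ls by (auto simp: sd[symmetric] intro!: bspec[OF dm] nth_mem subsetD[OF wf(1)])
        show "\<forall>i<s. \<exists>a\<in>T. \<forall>j<length sig. sig ! j = i \<longrightarrow> a ! j = ?t ! j"
        proof (intro allI impI)
          fix i assume i: "i < s"
          from memi[of i] i obtain a where a: "a \<in> T"
            and eq: "map \<phi> (map ((!) sc) (idx (sig, T) i)) = map ((!) a) (idx (sig, T) i)" by auto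
          show "\<exists>a\<in>T. \<forall>j<length sig. sig ! j = i \<longrightarrow> a ! j = ?t ! j"
          proof (intro bexI[OF _ a] allI impI)
            fix j assume j: "j < length sig" "sig ! j = i"
            then have "j \<in> set (idx (sig, T) i)" unfolding idx_def by auto
            then show "a ! j = ?t ! j" using eq ls j by (auto simp: map_eq_conv)
          qed
        qed
      qed
    qed
    show "is_solution (\<lambda>i. p i ^ m i) X \<delta> C' \<phi> = is_solution (\<lambda>i. p i ^ m i) X \<delta> C \<phi>"
      unfolding is_solution_def q_def[symmetric] using one two by blast
  qed
qed

end
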